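(* For all integers $n\ge 0$ and $m\ge 1$, \[ -\frac{2E_{n+m+1}}{\binom{n+m}{n}(n+m+1)}=\sum_{l=0}^{n}\sum_{k=0}^{m}\binom{n}{l}\binom{m}{k}E_{l}E_{k}\,\frac{\Gamma(n-l+1)\Gamma(m-k+1)}{\Gamma(n+m-l-k+2)}, \] and equivalently \[ E_{n+m+1}=-\frac{1}{2}\sum_{l=0}^{n}\sum_{k=0}^{m}\frac{\binom{n}{l}\binom{m}{k}\binom{n+m}{n}}{\binom{n+m-l-k}{n-l}}\cdot\frac{(n+m+1)E_{l}E_{k}}{n+m-l-k+1}. \]
   Context: The Euler numbers $E_n$ are defined by $\frac{2}{e^t+1}=\sum_{n\ge 0}E_n\frac{t^n}{n!}$ (so $E_n=E_n(0)$, where the Euler polynomials are given by $\frac{2}{e^t+1}e^{xt}=\sum_{n\ge0}E_n(x)\frac{t^n}{n!}$). $\Gamma$ is the Euler gamma function. *)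

theory Defs
  imports "HOL-Analysis.Analysis" "HOL-Computational_Algebra.Formal_Power_Series"
begin

definition euler_num :: "nat \<Rightarrow> real" where
  "euler_num n = fact n * fps_nth (fps_const 2 * inverse (fps_exp 1 + 1)) n"

end

theory Submission
  imports Defs
begin


definition ee :: "nat \<Rightarrow> real" where
  "ee i = fps_nth (fps_const 2 * inverse (fps_exp 1 + 1)) i"

lemma euler_ee: "euler_num i = fact i * ee i"
  by (simp add: euler_num_def ee_def)

lemma lemA: "(\<Sum>i=0..j. ee i / fact (Suc j - i)) = -2 * ee (Suc j)"
proof -
  define F :: "real fps" where "F = fps_const 2 * inverse (fps_exp 1 + 1)"
  have "F * (fps_exp 1 + 1) = fps_const 2"
    unfolding F_def by (simp add: mult.assoc inverse_mult_eq_1)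
  hence "fps_nth (F * fps_exp 1 + F) (Suc j) = fps_nth (fps_const 2) (Suc j)"
    by (simp add: distrib_left)
  hence "(\<Sum>i=0..Suc j. fps_nth F i * (1 / fact (Suc j - i))) + fps_nth F (Suc j) = 0"
    by (simp add: fps_mult_nth)
  hence "(\<Sum>i=0..j. fps_nth F i / fact (Suc j - i)) + 2 * fps_nth F (Suc j) = 0"
    by (simp add: sum.atLeast0_atMost_Suc)
  thus ?thesis unfolding ee_def F_def[symmetric] by linarith
qed

lemma lemT: "(\<Sum>l=0..n. \<Sum>k=0..m. ee l * ee k / fact (n+m+1-l-k)) = -2 * ee (n+m+1)"
proof (induction m arbitrary: n)
  case 0
  then show ?case using lemA[of n] by (simp add: ee_def)
next
  case (Suc m)
  define D where "D = (\<Sum>l=0..n. \<Sum>k=0..m. ee l * ee k / fact (n+m+2-l-k))"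
  have "(\<Sum>l=0..n. \<Sum>k=0..Suc m. ee l * ee k / fact (n+Suc m+1-l-k))
      = (\<Sum>l=0..n. (\<Sum>k=0..m. ee l * ee k / fact (n+m+2-l-k)) + ee (Suc m) * (ee l / fact (Suc n - l)))"
    by (intro sum.cong) (auto simp: sum.atLeast0_atMost_Suc Suc_diff_le)
  also have "\<dots> = D + ee (Suc m) * (-2 * ee (Suc n))"
  proof -
    have "(\<Sum>l=0..n. ee (Suc m) * (ee l / fact (Suc n - l))) = ee (Suc m) * (-2 * ee (Suc n))"
      using lemA[of n] by (simp only: sum_distrib_left[symmetric])
    thus ?thesis by (simp only: D_def sum.distrib)
  qed
  finally have 1: "(\<Sum>l=0..n. \<Sum>k=0..Suc m. ee l * ee k / fact (n+Suc m+1-l-k)) = D + ee (Suc m) * (-2 * ee (Suc n))" .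
  have "(\<Sum>l=0..Suc n. \<Sum>k=0..m. ee l * ee k / fact (Suc n+m+1-l-k))
      = D + ee (Suc n) * (\<Sum>k=0..m. ee k / fact (Suc m - k))"
    by (simp add: sum.atLeast0_atMost_Suc D_def sum_distrib_left Suc_diff_le)
  also have "\<dots> = D + ee (Suc n) * (-2 * ee (Suc m))" by (simp add: lemA)
  finally have 2: "(\<Sum>l=0..Suc n. \<Sum>k=0..m. ee l * ee k / fact (Suc n+m+1-l-k)) = D + ee (Suc n) * (-2 * ee (Suc m))" .
  have 3: "ee (Suc m) * (-2 * ee (Suc n)) = ee (Suc n) * (-2 * ee (Suc m))" by simp
  show ?case using 1 2 3 Suc.IH[of "Suc n"] by (simp only: add_Suc_right add_Suc)
qed


lemma Gam1: "Gamma (real a + 1) = fact a"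
  using Gamma_fact[of a] by (simp add: add.commute)
lemma Gam2: "Gamma (real a + 2) = fact (Suc a)"
  using Gamma_fact[of "Suc a"] by (simp add: add.commute)

lemma binr: "k \<le> n \<Longrightarrow> real (n choose k) = fact n / (fact k * fact (n - k))"
  by (simp add: binomial_fact)

lemma term1:
  assumes "l \<le> n" "k \<le> m"
  shows "real (n choose l) * real (m choose k) * euler_num l * euler_num k
                * (Gamma (real (n - l) + 1) * Gamma (real (m - k) + 1)
                   / Gamma (real (n + m - l - k) + 2))
       = fact n * fact m * (ee l * ee k / fact (n+m+1-l-k))"
proof -
  have e: "n + m + 1 - l - k = Suc (n + m - l - k)" using assms by simp
  show ?thesis using assms unfolding Gam1 Gam2 e euler_ee
    by (simp add: binr field_simps)
qed

lemma term2:
  assumes "l \<le> n" "k \<le> m"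
  shows "real (n choose l) * real (m choose k) * real ((n + m) choose n)
                / real ((n + m - l - k) choose (n - l))
                * (real (n + m + 1) * euler_num l * euler_num k / real (n + m - l - k + 1))
       = fact (n+m+1) * (ee l * ee k / fact (n+m+1-l-k))"
proof -
  define a where "a = n + m - l - k"
  have e: "n + m + 1 - l - k = Suc a" using assms a_def by simp
  have e2: "a - (n - l) = m - k" using assms a_def by simp
  have e3: "n + m - n = m" by simp
  have le: "n - l \<le> a" using assms a_def by simp
  have f: "fact (Suc a) = real (a+1) * fact a" by simp
  have g: "fact (n+m+1) = real (n+m+1) * fact (n+m)" by simp
  have p: "real (a+1) > 0" by simp
  show ?thesis using assms unfolding e euler_ee a_def[symmetric] binr[OF le] e2 binr[of n "n+m", simplified] e3 f g
    using p by (simp add: binr field_simps del: of_nat_add of_nat_Suc)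
qed


theorem theorem4:
  fixes n m :: nat
  assumes "m \<ge> 1"
  shows "(- 2 * euler_num (n + m + 1) / (real ((n + m) choose n) * real (n + m + 1))
           = (\<Sum>l=0..n. \<Sum>k=0..m. real (n choose l) * real (m choose k)
                * euler_num l * euler_num k
                * (Gamma (real (n - l) + 1) * Gamma (real (m - k) + 1)
                   / Gamma (real (n + m - l - k) + 2))))
       \<and> (euler_num (n + m + 1) = - (1/2) * (\<Sum>l=0..n. \<Sum>k=0..m.
                real (n choose l) * real (m choose k) * real ((n + m) choose n)
                / real ((n + m - l - k) choose (n - l))
                * (real (n + m + 1) * euler_num l * euler_num k / real (n + m - l - k + 1))))"
proof -
  have T: "(\<Sum>l=0..n. \<Sum>k=0..m. ee l * ee k / fact (n+m+1-l-k)) = -2 * ee (n+m+1)" by (rule lemT)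
  have s1: "(\<Sum>l=0..n. \<Sum>k=0..m. real (n choose l) * real (m choose k)
                * euler_num l * euler_num k
                * (Gamma (real (n - l) + 1) * Gamma (real (m - k) + 1)
                   / Gamma (real (n + m - l - k) + 2)))
       = fact n * fact m * (-2 * ee (n+m+1))" (is "?lhs = _")
  proof -
    have "?lhs = (\<Sum>l=0..n. \<Sum>k=0..m. fact n * fact m * (ee l * ee k / fact (n+m+1-l-k)))"
      by (rule sum.cong[OF refl], rule sum.cong[OF refl], rule term1) auto
    thus ?thesis by (simp only: sum_distrib_left[symmetric] T)
  qed
  have s2: "(\<Sum>l=0..n. \<Sum>k=0..m.
                real (n choose l) * real (m choose k) * real ((n + m) choose n)
                / real ((n + m - l - k) choose (n - l))
                * (real (n + m + 1) * euler_num l * euler_num k / real (n + m - l - k + 1)))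
       = fact (n+m+1) * (-2 * ee (n+m+1))" (is "?lhs = _")
  proof -
    have "?lhs = (\<Sum>l=0..n. \<Sum>k=0..m. fact (n+m+1) * (ee l * ee k / fact (n+m+1-l-k)))"
      by (rule sum.cong[OF refl], rule sum.cong[OF refl], rule term2) auto
    thus ?thesis by (simp only: sum_distrib_left[symmetric] T)
  qed
  have c: "real ((n + m) choose n) = fact (n+m) / (fact n * fact m)"
    using binr[of n "n+m"] by simp
  have g: "fact (n+m+1) = real (n+m+1) * fact (n+m)" by simp
  have p: "fact (n+m) > (0::real)" "fact n > (0::real)" "fact m > (0::real)" by auto
  have q: "fact m * (fact n * real (m + n choose n)) = (fact (m + n) :: real)"
    using c p by (simp add: add.commute field_simps)
  have h: "fact (Suc (m + n)) = fact m * (fact n * (real (Suc (m + n)) * real (m + n choose n)))"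
  proof -
    have "fact (Suc (m + n)) = real (Suc (m+n)) * (fact (m + n) :: real)" by simp
    also have "\<dots> = real (Suc (m+n)) * (fact m * (fact n * real (m + n choose n)))" by (simp only: q)
    finally show ?thesis by (simp only: ac_simps)
  qed
  show ?thesis unfolding s1 s2 using p
    by (simp add: c g euler_ee field_simps del: of_nat_add of_nat_Suc fact_Suc) (simp add: h q)
qed

end
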